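(* Let $H$ be a graph with degree sequence $\pi(H)=(h_1,\ldots,h_k)$ and let $\pi=(d_1,\ldots,d_n)$ be a graphic sequence with $d_1\le M$ (i.e., every term is at most $M$) such that there are terms $d_{i_1},\ldots,d_{i_k}$ of $\pi$ (with distinct indices $i_1,\ldots,i_k$) satisfying $d_{i_j}\ge h_j$ for $1\le j\le k$. If $\pi$ has at least $2M^2+k$ positive terms, then there is a realization $G$ of $\pi$ containing a copy of $H$ whose vertices are the vertices of $G$ corresponding to the terms $d_{i_1},\ldots,d_{i_k}$.
   Context: A sequence of nonnegative integers is graphic if it is the degree sequence of some (finite simple) graph, called a realization; graphic sequences are written in nonincreasing order. The degree sequence of $H$ is written in nonincreasing order. *)

theory Defs
  imports Main
begin

definition is_graph :: "nat \<Rightarrow> (nat \<Rightarrow> nat \<Rightarrow> bool) \<Rightarrow> bool" where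
  "is_graph n E \<longleftrightarrow> (\<forall>u v. E u v \<longrightarrow> u < n \<and> v < n \<and> u \<noteq> v \<and> E v u)"

definition degree :: "nat \<Rightarrow> (nat \<Rightarrow> nat \<Rightarrow> bool) \<Rightarrow> nat \<Rightarrow> nat" where
  "degree n E v = card {u. u < n \<and> E v u}"

definition realizes :: "(nat \<Rightarrow> nat \<Rightarrow> bool) \<Rightarrow> nat list \<Rightarrow> bool" where
  "realizes E d \<longleftrightarrow> is_graph (length d) E \<and>
     (\<forall>i < length d. degree (length d) E i = d ! i)"

definition graphic :: "nat list \<Rightarrow> bool" where
  "graphic d \<longleftrightarrow> sorted_wrt (\<ge>) d \<and> (\<exists>E. realizes E d)"

end

theory Submission imports Defs begin
lemma card3: "e1\<noteq>e2 \<Longrightarrow> e1\<noteq>e3 \<Longrightarrow> e2\<noteq>e3 \<Longrightarrow> card {e\<in>{e1,e2,e3}. w\<in>e} = (if w\<in>e1 then 1 else 0) + (if w\<in>e2 then 1 else 0) + (if w\<in>e3 then (1::nat) else 0)"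
proof -
  assume "e1\<noteq>e2" "e1\<noteq>e3" "e2\<noteq>e3"
  have "{e\<in>{e1,e2,e3}. w\<in>e} = (if w\<in>e1 then {e1} else {}) \<union> (if w\<in>e2 then {e2} else {}) \<union> (if w\<in>e3 then {e3} else {})" by auto
  then show ?thesis using \<open>e1\<noteq>e2\<close> \<open>e1\<noteq>e3\<close> \<open>e2\<noteq>e3\<close> by (simp add: card_insert_if)
qed
lemma card2: "e1\<noteq>e2 \<Longrightarrow> card {e\<in>{e1,e2}. w\<in>e} = (if w\<in>e1 then 1 else 0) + (if w\<in>e2 then (1::nat) else 0)"
proof -
  assume "e1\<noteq>e2"
  have "{e\<in>{e1,e2}. w\<in>e} = (if w\<in>e1 then {e1} else {}) \<union> (if w\<in>e2 then {e2} else {})" by auto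
  then show ?thesis using \<open>e1\<noteq>e2\<close> by (simp add: card_insert_if)
qed
lemma card_nbr: assumes "\<forall>e\<in>S. \<exists>p q. e = {p,q}" shows "card {q. {w,q} \<in> S} = card {e\<in>S. w\<in>e}"
proof -
  have "inj_on (\<lambda>q. {w,q}) {q. {w,q} \<in> S}" by (auto simp: inj_on_def doubleton_eq_iff)
  moreover have "(\<lambda>q. {w,q}) ` {q. {w,q} \<in> S} = {e\<in>S. w\<in>e}"
  proof
    show "{e\<in>S. w\<in>e} \<subseteq> (\<lambda>q. {w,q}) ` {q. {w,q} \<in> S}"
    proof
      fix e assume e: "e \<in> {e\<in>S. w\<in>e}"
      then obtain p q where "e = {p,q}" using assms by blast
      with e show "e \<in> (\<lambda>q. {w,q}) ` {q. {w,q} \<in> S}" by (auto simp: insert_commute)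
    qed
  qed auto
  ultimately show ?thesis by (metis card_image)
qed

definition sw :: "(nat\<Rightarrow>nat\<Rightarrow>bool) \<Rightarrow> nat set set \<Rightarrow> nat set set \<Rightarrow> nat\<Rightarrow>nat\<Rightarrow>bool" where
  "sw G R A p q = ((G p q \<and> {p,q} \<notin> R) \<or> {p,q} \<in> A)"

lemma switch_realizes:
  assumes re: "realizes G d" and fR: "finite R" and fA: "finite A"
    and Rp: "\<forall>e\<in>R. \<exists>p q. e = {p,q} \<and> G p q"
    and Ap: "\<forall>e\<in>A. \<exists>p q. e = {p,q} \<and> p\<noteq>q \<and> p<length d \<and> q<length d \<and> \<not>G p q"
    and cnt: "\<forall>w. card {e\<in>R. w\<in>e} = card {e\<in>A. w\<in>e}"
  shows "realizes (sw G R A) d"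
proof -
  let ?n = "length d"
  have gr: "is_graph ?n G" and dg: "\<And>i. i<?n \<Longrightarrow> degree ?n G i = d!i" using re by (auto simp: realizes_def)
  have sym: "G p q \<Longrightarrow> G q p" and rng: "G p q \<Longrightarrow> p < ?n \<and> q < ?n \<and> p \<noteq> q" for p q
    using gr by (auto simp: is_graph_def)
  have "is_graph ?n (sw G R A)"
    unfolding is_graph_def
  proof (intro allI impI)
    fix p q assume "sw G R A p q"
    then consider "G p q" "{p,q} \<notin> R" | "{p,q} \<in> A" unfolding sw_def by blast
    then show "p < ?n \<and> q < ?n \<and> p \<noteq> q \<and> sw G R A q p"
    proof cases
      case 1 then show ?thesis using rng[of p q] sym[of p q] by (auto simp: sw_def insert_commute)
    next
      case 2
      then obtain p' q' where "{p,q} = {p',q'}" "p'\<noteq>q'" "p'<?n" "q'<?n" using Ap by blast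
      then show ?thesis using 2 by (auto simp: sw_def insert_commute doubleton_eq_iff)
    qed
  qed
  moreover have "degree ?n (sw G R A) w = d!w" if w: "w < ?n" for w
  proof -
    define N where "N = {q. q<?n \<and> G w q}"
    define RN where "RN = {q. {w,q}\<in>R}"
    define AN where "AN = {q. {w,q}\<in>A}"
    have RN: "RN \<subseteq> N"
    proof
      fix q assume "q \<in> RN"
      then obtain p' q' where "{w,q} = {p',q'}" "G p' q'" using Rp RN_def by blast
      then have "G w q" using sym by (auto simp: doubleton_eq_iff)
      then show "q \<in> N" using rng unfolding N_def by blast
    qed
    have AN: "AN \<subseteq> {..<?n}" "AN \<inter> N = {}"
    proof -
      show "AN \<subseteq> {..<?n}"
      proof
        fix q assume "q \<in> AN"
        then obtain p' q' where "{w,q} = {p',q'}" "p'<?n" "q'<?n" using Ap AN_def by blast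
        then show "q \<in> {..<?n}" by (auto simp: doubleton_eq_iff)
      qed
      show "AN \<inter> N = {}"
      proof (rule ccontr)
        assume "AN \<inter> N \<noteq> {}"
        then obtain q where q: "q \<in> AN" "G w q" using N_def by auto
        then obtain p' q' where "{w,q} = {p',q'}" "\<not> G p' q'" using Ap AN_def by blast
        then show False using q sym by (auto simp: doubleton_eq_iff)
      qed
    qed
    have fN: "finite N" unfolding N_def by auto
    have fAN: "finite AN" using AN(1) finite_subset by blast
    have eq: "{q. q<?n \<and> sw G R A w q} = (N - RN) \<union> AN"
      using AN(1) unfolding sw_def N_def RN_def AN_def by auto
    have cR: "card RN = card {e\<in>R. w\<in>e}" unfolding RN_def by (rule card_nbr) (use Rp in blast)
    have cA: "card AN = card {e\<in>A. w\<in>e}" unfolding AN_def by (rule card_nbr) (use Ap in blast)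
    have "card ((N - RN) \<union> AN) = card (N - RN) + card AN"
      by (rule card_Un_disjoint) (use fN fAN AN(2) in auto)
    also have "\<dots> = card N - card RN + card AN" using RN fN by (simp add: card_Diff_subset finite_subset)
    also have "\<dots> = card N" using cR cA cnt RN fN card_mono[OF fN RN] by simp
    finally show ?thesis using eq dg[OF w] unfolding degree_def N_def by simp
  qed
  ultimately show ?thesis by (simp add: realizes_def)
qed

lemma choose_nb:
  assumes re: "realizes G d" and H: "is_graph k H"
    and idx_range: "\<And>j. j < k \<Longrightarrow> idx j < length d"
    and idx_inj: "inj_on idx {0..<k}"
    and idx_deg: "\<And>j. j < k \<Longrightarrow> d ! (idx j) \<ge> degree k H j"
    and j: "j0 < k" "j1 < k" "H j0 j1" "\<not> G (idx j0) (idx j1)"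
  shows "\<exists>x. G (idx j0) x \<and> \<not>(\<exists>j<k. x = idx j \<and> H j0 j)"
proof (rule ccontr)
  assume c: "\<not> ?thesis"
  let ?n = "length d"
  define T where "T = {q. q<?n \<and> G (idx j0) q}"
  define J where "J = {j. j<k \<and> H j0 j}"
  have "T \<subseteq> idx ` (J - {j1})" using c j unfolding T_def J_def by auto
  have fJ: "finite (J - {j1})" unfolding J_def by auto
  have "card T \<le> card (idx ` (J - {j1}))" by (rule card_mono) (use fJ \<open>T \<subseteq> idx ` (J - {j1})\<close> in auto)
  also have "\<dots> \<le> card (J - {j1})" by (rule card_image_le[OF fJ])
  also have "\<dots> < card J" using j unfolding J_def by (intro card_Diff1_less) auto
  also have "card J = degree k H j0" unfolding J_def degree_def by simp
  also have "\<dots> \<le> d ! idx j0" using idx_deg j by auto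
  also have "\<dots> = card T" using re idx_range j unfolding realizes_def degree_def T_def by auto
  finally show False by simp
qed

lemma improve:
  fixes H :: "nat \<Rightarrow> nat \<Rightarrow> bool" and k :: nat
    and d :: "nat list" and M :: nat and idx :: "nat \<Rightarrow> nat"
  assumes H: "is_graph k H"
    and bound: "\<forall>x \<in> set d. x \<le> M"
    and idx_range: "\<And>j. j < k \<Longrightarrow> idx j < length d"
    and idx_inj: "inj_on idx {0..<k}"
    and idx_deg: "\<And>j. j < k \<Longrightarrow> d ! (idx j) \<ge> degree k H j"
    and pos: "card {i. i < length d \<and> d ! i > 0} \<ge> 2 * M ^ 2 + k"
    and re: "realizes G d"
    and j: "j0 < k" "j1 < k" "H j0 j1" "\<not> G (idx j0) (idx j1)"
  shows "\<exists>G'. realizes G' d \<and> G' (idx j0) (idx j1) \<and>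
     (\<forall>j j'. j < k \<longrightarrow> j' < k \<longrightarrow> H j j' \<longrightarrow> G (idx j) (idx j') \<longrightarrow> G' (idx j) (idx j'))"
proof -
  let ?n = "length d"
  define u where "u = idx j0"
  define v where "v = idx j1"
  have gr: "is_graph ?n G" and dg: "\<And>i. i<?n \<Longrightarrow> card {q. q<?n \<and> G i q} = d!i"
    using re by (auto simp: realizes_def degree_def)
  have sym: "G p q \<Longrightarrow> G q p" and rng: "G p q \<Longrightarrow> p < ?n \<and> q < ?n \<and> p \<noteq> q" for p q
    using gr by (auto simp: is_graph_def)
  have Hsym: "H p q \<Longrightarrow> H q p" and Hrng: "H p q \<Longrightarrow> p < k \<and> q < k \<and> p \<noteq> q" for p q
    using H by (auto simp: is_graph_def)
  have dM: "i < ?n \<Longrightarrow> d!i \<le> M" for i using bound by auto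
  have un: "u < ?n" "v < ?n" using idx_range j u_def v_def by auto
  have uv: "u \<noteq> v" using Hrng[OF j(3)] idx_inj j unfolding u_def v_def inj_on_def by auto
  have nuv1: "\<not> G u v" using j(4) u_def v_def by simp
  have nuv: "\<not> G u v" "\<not> G v u" using nuv1 sym by blast+
  obtain x where x: "G u x" "\<not>(\<exists>j<k. x = idx j \<and> H j0 j)"
    using choose_nb[OF re H idx_range idx_inj idx_deg j] u_def by blast
  obtain y where y: "G v y" "\<not>(\<exists>j<k. y = idx j \<and> H j1 j)"
    using choose_nb[OF re H idx_range idx_inj idx_deg j(2) j(1) Hsym[OF j(3)]] j(4) sym v_def u_def by blast
  have xu: "x \<noteq> u" "x \<noteq> v" "y \<noteq> v" "y \<noteq> u" using x y rng nuv sym by blast+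
  have xn: "x < ?n" "y < ?n" using x y rng by blast+
  define nonH where "nonH e \<longleftrightarrow> (\<forall>j j'. j<k \<longrightarrow> j'<k \<longrightarrow> H j j' \<longrightarrow> e \<noteq> {idx j, idx j'})" for e
  have nHux: "nonH {u,x}"
    unfolding nonH_def
  proof (intro allI impI)
    fix j j' assume a: "j<k" "j'<k" "H j j'"
    show "{u,x} \<noteq> {idx j, idx j'}"
    proof
      assume "{u,x} = {idx j, idx j'}"
      then consider "u = idx j" "x = idx j'" | "u = idx j'" "x = idx j" by (auto simp: doubleton_eq_iff)
      then show False
      proof cases
        case 1 then have "j = j0" using idx_inj a j u_def unfolding inj_on_def by auto
        then show False using 1 a x by auto
      next
        case 2 then have "j' = j0" using idx_inj a j u_def unfolding inj_on_def by auto
        then show False using 2 a x(2) Hsym[OF a(3)] by blast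
      qed
    qed
  qed
  have nHvy: "nonH {v,y}"
    unfolding nonH_def
  proof (intro allI impI)
    fix j j' assume a: "j<k" "j'<k" "H j j'"
    show "{v,y} \<noteq> {idx j, idx j'}"
    proof
      assume "{v,y} = {idx j, idx j'}"
      then consider "v = idx j" "y = idx j'" | "v = idx j'" "y = idx j" by (auto simp: doubleton_eq_iff)
      then show False
      proof cases
        case 1 then have "j = j1" using idx_inj a j v_def unfolding inj_on_def by auto
        then show False using 1 a y by auto
      next
        case 2 then have "j' = j1" using idx_inj a j v_def unfolding inj_on_def by auto
        then show False using 2 a y(2) Hsym[OF a(3)] by blast
      qed
    qed
  qed
  have keep: "\<forall>j j'. j < k \<longrightarrow> j' < k \<longrightarrow> H j j' \<longrightarrow> G (idx j) (idx j') \<longrightarrow> sw G R A (idx j) (idx j')"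
    if "\<forall>e\<in>R. nonH e" for R A using that unfolding sw_def nonH_def by blast
  show ?thesis
  proof (cases "x \<noteq> y \<and> \<not> G x y")
    case True
    define R where "R = {{u,x},{v,y}}"
    define A where "A = {{u,v},{x,y}}"
    have "realizes (sw G R A) d"
    proof (rule switch_realizes[OF re])
      show "finite R" "finite A" unfolding R_def A_def by auto
      show "\<forall>e\<in>R. \<exists>p q. e = {p,q} \<and> G p q" unfolding R_def using x y by auto
      show "\<forall>e\<in>A. \<exists>p q. e = {p,q} \<and> p\<noteq>q \<and> p<?n \<and> q<?n \<and> \<not>G p q"
        unfolding A_def using True uv un xn nuv by auto
      have d1: "{u,x} \<noteq> {v,y}" "{u,v} \<noteq> {x,y}" using uv xu by (auto simp: doubleton_eq_iff)
      show "\<forall>w. card {e\<in>R. w\<in>e} = card {e\<in>A. w\<in>e}"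
        unfolding R_def A_def using card2[OF d1(1)] card2[OF d1(2)] uv xu True by auto
    qed
    moreover have "sw G R A u v" unfolding sw_def A_def by auto
    moreover have "\<forall>e\<in>R. nonH e" unfolding R_def using nHux nHvy by auto
    ultimately show ?thesis using keep u_def v_def by blast
  next
    case False
    define Nb where "Nb w = {q. q<?n \<and> G w q}" for w
    have fNb: "finite (Nb w)" for w unfolding Nb_def by auto
    have cNb: "card (Nb w) \<le> M" for w
    proof (cases "w < ?n")
      case True then show ?thesis using dg dM Nb_def by auto
    next
      case False then have "Nb w = {}" using rng unfolding Nb_def by blast
      then show ?thesis by simp
    qed
    have uNx: "u \<in> Nb x" using x sym rng Nb_def by blast
    obtain z where z: "G x z" "z \<noteq> u"
    proof (cases "x = y")
      case True then show ?thesis using that[of v] sym[OF y(1)] uv by simp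
    next
      case F: False then show ?thesis using that[of y] False xu by auto
    qed
    have "card {u,z} \<le> card (Nb x)" using z uNx rng[OF z(1)] by (intro card_mono[OF fNb]) (auto simp: Nb_def)
    then have M2: "2 \<le> M" using z cNb[of x] by simp
    define Idx where "Idx = idx ` {0..<k}"
    define NN where "NN = (\<Union>q\<in>Nb x. Nb q)"
    define B where "B = Idx \<union> (Nb x - {u}) \<union> Nb y \<union> NN"
    define P where "P = {i. i < ?n \<and> d ! i > 0}"
    have uI: "u \<in> Idx" "v \<in> Idx" using j u_def v_def Idx_def by auto
    have fI: "finite Idx" unfolding Idx_def by auto
    have fNN: "finite NN" unfolding NN_def using fNb by auto
    have fB: "finite B" unfolding B_def using fI fNb fNN by auto
    have cI: "card Idx \<le> k" unfolding Idx_def using card_image_le[of "{0..<k}" idx] by simp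
    have cNx: "card (Nb x - {u}) \<le> M - 1" using uNx cNb[of x] fNb by (simp add: card_Diff_singleton)
    have "card NN \<le> (\<Sum>q\<in>Nb x. card (Nb q))" unfolding NN_def by (rule card_UN_le[OF fNb])
    also have "\<dots> \<le> card (Nb x) * M" using sum_bounded_above[of "Nb x" "\<lambda>q. card (Nb q)" M] cNb by simp
    also have "\<dots> \<le> M * M" using cNb[of x] by simp
    finally have cNN: "card NN \<le> M * M" .
    have "card B \<le> card Idx + card (Nb x - {u}) + card (Nb y) + card NN"
      unfolding B_def by (meson card_Un_le add_le_mono le_trans order_refl)
    also have "\<dots> \<le> k + (M - 1) + M + M * M" using cI cNx cNb[of y] cNN by linarith
    also have "\<dots> < 2 * M^2 + k"
    proof -
      have "2 * M \<le> M * M" using M2 by (simp add: mult_right_mono)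
      then show ?thesis using M2 unfolding power2_eq_square by linarith
    qed
    also have "\<dots> \<le> card P" using pos P_def by simp
    finally have "card B < card P" .
    have "\<not> P \<subseteq> B"
    proof
      assume "P \<subseteq> B"
      then have "card P \<le> card B" by (rule card_mono[OF fB])
      then show False using \<open>card B < card P\<close> by simp
    qed
    then obtain a where aP: "a \<in> P" and aB: "a \<notin> B" by blast
    have an: "a < ?n" "d ! a > 0" using aP unfolding P_def by auto
    have aB': "a \<notin> Idx" "a \<notin> Nb x - {u}" "a \<notin> Nb y" "a \<notin> NN" using aB unfolding B_def by blast+
    have aI: "a \<notin> Idx" by (rule aB'(1))
    have aux: "a \<noteq> u" "a \<noteq> v" using aI uI by blast+
    have "a \<notin> Nb x" using aB'(2) aux(1) by blast
    then have nxa: "\<not> G x a" using an(1) unfolding Nb_def by blast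
    have nya: "\<not> G y a" using aB'(3) an(1) unfolding Nb_def by blast
    have aNN: "a \<notin> NN" by (rule aB'(4))
    have "x \<in> Nb u" using x rng unfolding Nb_def by blast
    then have xNN: "x \<in> NN" unfolding NN_def using uNx by blast
    have ax: "a \<noteq> x" using aNN xNN by blast
    have ay: "a \<noteq> y"
    proof (cases "x = y")
      case True then show ?thesis using ax by simp
    next
      case F: False
      then have "G x y" using \<open>\<not> (x \<noteq> y \<and> \<not> G x y)\<close> by blast
      then show ?thesis using nxa by blast
    qed
    have "Nb a \<noteq> {}" using an dg[of a] unfolding Nb_def by (metis card.empty less_irrefl)
    then obtain b where ab: "G a b" unfolding Nb_def by auto
    have nxb: "\<not> G x b"
    proof
      assume "G x b"
      then have "b \<in> Nb x" using rng unfolding Nb_def by blast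
      moreover have "a \<in> Nb b" using sym[OF ab] an(1) unfolding Nb_def by blast
      ultimately have "b \<in> Nb x" "a \<in> Nb b" by blast+
      then show False using aNN NN_def by auto
    qed
    have bx: "b \<noteq> x" "a \<noteq> b" using ab nxa sym rng by blast+
    have bn: "b < ?n" using ab rng by blast
    have nHab: "nonH {a,b}"
      unfolding nonH_def
    proof (intro allI impI)
      fix j j' assume jj: "j<k" "j'<k" "H j j'"
      show "{a,b} \<noteq> {idx j, idx j'}"
      proof
        assume "{a,b} = {idx j, idx j'}"
        then have "a = idx j \<or> a = idx j'" by (auto simp: doubleton_eq_iff)
        then show False using aI jj Idx_def by auto
      qed
    qed
    define R where "R = {{u,x},{v,y},{a,b}}"
    define A where "A = {{u,v},{y,a},{x,b}}"
    have ind: "p \<noteq> q \<Longrightarrow> (if w = p \<or> w = q then 1 else 0) = (if w = p then 1 else 0) + (if w = q then (1::nat) else 0)" for p q w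
      by auto
    have "realizes (sw G R A) d"
    proof (rule switch_realizes[OF re])
      show "finite R" "finite A" unfolding R_def A_def by auto
      show "\<forall>e\<in>R. \<exists>p q. e = {p,q} \<and> G p q" unfolding R_def using x y ab by auto
      show "\<forall>e\<in>A. \<exists>p q. e = {p,q} \<and> p\<noteq>q \<and> p<?n \<and> q<?n \<and> \<not>G p q"
        unfolding A_def using uv un xn nuv an bn ay bx nya nxb by auto
      have d1: "{u,x} \<noteq> {v,y}" "{u,x} \<noteq> {a,b}" "{v,y} \<noteq> {a,b}"
        using uv xu aux ax ay by (auto simp: doubleton_eq_iff)
      have d2: "{u,v} \<noteq> {y,a}" "{u,v} \<noteq> {x,b}" "{y,a} \<noteq> {x,b}"
        using uv xu aux ax bx by (auto simp: doubleton_eq_iff)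
      have ne: "u \<noteq> x" "v \<noteq> y" "a \<noteq> b" "u \<noteq> v" "y \<noteq> a" "x \<noteq> b" using xu uv bx ay by auto
      show "\<forall>w. card {e\<in>R. w\<in>e} = card {e\<in>A. w\<in>e}"
      proof
        fix w
        show "card {e\<in>R. w\<in>e} = card {e\<in>A. w\<in>e}"
          unfolding R_def A_def card3[OF d1] card3[OF d2]
          apply (simp only: insert_iff empty_iff simp_thms)
          apply (simp only: ind[OF ne(1)] ind[OF ne(2)] ind[OF ne(3)] ind[OF ne(4)] ind[OF ne(5)] ind[OF ne(6)])
          done
      qed
    qed
    moreover have "sw G R A u v" unfolding sw_def A_def by auto
    moreover have "\<forall>e\<in>R. nonH e" unfolding R_def using nHux nHvy nHab by auto
    ultimately show ?thesis using keep u_def v_def by blast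
  qed
qed

theorem lemma2p3:
  fixes H :: "nat \<Rightarrow> nat \<Rightarrow> bool" and k :: nat
    and d :: "nat list" and M :: nat and idx :: "nat \<Rightarrow> nat"
  assumes H: "is_graph k H"
    and H_sorted: "\<And>j j'. j \<le> j' \<Longrightarrow> j' < k \<Longrightarrow> degree k H j' \<le> degree k H j"
    and graphic: "graphic d"
    and bound: "\<forall>x \<in> set d. x \<le> M"
    and idx_range: "\<And>j. j < k \<Longrightarrow> idx j < length d"
    and idx_inj: "inj_on idx {0..<k}"
    and idx_deg: "\<And>j. j < k \<Longrightarrow> d ! (idx j) \<ge> degree k H j"
    and pos: "card {i. i < length d \<and> d ! i > 0} \<ge> 2 * M ^ 2 + k"
  shows "\<exists>G. realizes G d \<and>
           (\<forall>j j'. j < k \<longrightarrow> j' < k \<longrightarrow> H j j' \<longrightarrow> G (idx j) (idx j'))"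
proof -
  define miss where "miss G = {(j,j'). j<k \<and> j'<k \<and> H j j' \<and> \<not> G (idx j) (idx j')}" for G :: "nat \<Rightarrow> nat \<Rightarrow> bool"
  have fm: "finite (miss G)" for G
    by (rule finite_subset[of _ "{..<k} \<times> {..<k}"]) (auto simp: miss_def)
  obtain G0 where G0: "realizes G0 d" using graphic unfolding graphic_def by blast
  obtain G where re: "realizes G d" and mn: "\<And>G'. realizes G' d \<Longrightarrow> card (miss G) \<le> card (miss G')"
    using ex_has_least_nat[of "\<lambda>G. realizes G d" G0 "\<lambda>G. card (miss G)"] G0 by blast
  have "miss G = {}"
  proof (rule ccontr)
    assume "miss G \<noteq> {}"
    then obtain j0 j1 where jj: "(j0,j1) \<in> miss G" by auto
    then have j: "j0 < k" "j1 < k" "H j0 j1" "\<not> G (idx j0) (idx j1)" unfolding miss_def by auto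
    obtain G' where G': "realizes G' d" "G' (idx j0) (idx j1)"
      "\<forall>j j'. j < k \<longrightarrow> j' < k \<longrightarrow> H j j' \<longrightarrow> G (idx j) (idx j') \<longrightarrow> G' (idx j) (idx j')"
      using improve[OF H bound idx_range idx_inj idx_deg pos re j] by blast
    have "miss G' \<subseteq> miss G - {(j0,j1)}" using G'(2,3) unfolding miss_def by auto
    then have "miss G' \<subset> miss G" using jj by blast
    then have "card (miss G') < card (miss G)" by (rule psubset_card_mono[OF fm])
    then show False using mn[OF G'(1)] by simp
  qed
  then show ?thesis using re unfolding miss_def by blast
qed

end
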